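(* Let $\lambda>0$ with $\lambda\neq 1$ and $\mu=1/\lambda$, and let $A\in M_3\otimes M_3$ be the $9\times 9$ matrix (written as a $3\times 3$ block matrix with $3\times 3$ blocks) $$A=\left(\begin{array}{ccc|ccc|ccc} 1&0&0&0&1&0&0&0&1\\ 0&\lambda^2&0&1&0&0&0&0&0\\ 0&0&\mu^2&0&0&0&1&0&0\\ \hline 0&1&0&\mu^2&0&0&0&0&0\\ 1&0&0&0&1&0&0&0&1\\ 0&0&0&0&0&\lambda^2&0&1&0\\ \hline 0&0&1&0&0&0&\lambda^2&0&0\\ 0&0&0&0&0&1&0&\mu^2&0\\ 1&0&0&0&1&0&0&0&1 \end{array}\right).$$ Then $A\in\mathbb{T}\setminus\mathbb{V}_1$ (i.e. $A$ is, up to normalization, an entangled state with positive partial transpose), and $A$ generates an extreme ray of the cone $\mathbb{T}$: whenever $A=B+C$ with $B,C\in\mathbb{T}$, both $B$ and $C$ are nonnegative scalar multiples of $A$.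
   Context: Identify $M_3\otimes M_3$ with $3\times 3$ block matrices $A=\sum_{i,j=1}^3 a_{ij}\otimes e_{ij}$ with blocks $a_{ij}\in M_3$; the partial transpose is $A^\tau=\sum_{i,j}a_{ji}\otimes e_{ij}$. $\mathbb{T}$ is the cone of $A\in M_3\otimes M_3$ such that both $A$ and $A^\tau$ are positive semi-definite. For $z\in M_3$ with rows $z_1,z_2,z_3\in\mathbb C^3$ (as column vectors), $\tilde z\tilde z^*$ denotes the block matrix whose $(i,j)$ block is $z_iz_j^*$; $\mathbb{V}_1$ is the convex cone generated by $\{\tilde z\tilde z^*:\operatorname{rank} z\le 1\}$. *)

theory Defs
  imports "HOL-Analysis.Analysis"
begin

text \<open>M_3 is complex^3^3; M_3 (x) M_3 is complex^(3*3)^(3*3), the row/column index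
 (i,k) meaning block i, position k inside the block. So A $ (i,k) $ (j,l) is the
 (k,l) entry of the block a_ij.\<close>

type_synonym bmat = "complex^(3 \<times> 3)^(3 \<times> 3)"

definition hermitian_mat :: "complex^'n^'n \<Rightarrow> bool" where
  "hermitian_mat M \<longleftrightarrow> (\<forall>r c. M $ r $ c = cnj (M $ c $ r))"

definition psd :: "complex^'n^'n \<Rightarrow> bool" where
  "psd M \<longleftrightarrow> hermitian_mat M \<and>
     (\<forall>x :: complex^'n. 0 \<le> Re (\<Sum>r\<in>UNIV. \<Sum>c\<in>UNIV. cnj (x $ r) * M $ r $ c * x $ c))"

text \<open>Partial transpose: the (i,j) block of A^tau is a_ji.\<close>
definition ptrans :: "bmat \<Rightarrow> bmat" where
  "ptrans A = (\<chi> p q. A $ (fst q, snd p) $ (fst p, snd q))"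

definition coneT :: "bmat set" where
  "coneT = {A. psd A \<and> psd (ptrans A)}"

text \<open>z-tilde z-tilde^*: the (i,j) block is z_i z_j^*, z_i the i-th row of z.\<close>
definition ztilde_outer :: "complex^3^3 \<Rightarrow> bmat" where
  "ztilde_outer z = (\<chi> p q. z $ fst p $ snd p * cnj (z $ fst q $ snd q))"

definition coneV1 :: "bmat set" where
  "coneV1 = convex_cone hull {ztilde_outer z | z. rank z \<le> 1}"

definition idx3 :: "3 \<Rightarrow> nat" where
  "idx3 i = (if i = 0 then 0 else if i = 1 then 1 else 2)"

definition Aentries :: "real \<Rightarrow> real list list" where
  "Aentries lam = (let mu = 1 / lam; a = lam^2; b = mu^2 in
    [[1,0,0, 0,1,0, 0,0,1],
     [0,a,0, 1,0,0, 0,0,0],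
     [0,0,b, 0,0,0, 1,0,0],
     [0,1,0, b,0,0, 0,0,0],
     [1,0,0, 0,1,0, 0,0,1],
     [0,0,0, 0,0,a, 0,1,0],
     [0,0,1, 0,0,0, a,0,0],
     [0,0,0, 0,0,1, 0,b,0],
     [1,0,0, 0,1,0, 0,0,1]])"

definition Amat :: "real \<Rightarrow> bmat" where
  "Amat lam = (\<chi> p q. complex_of_real
     (Aentries lam ! (3 * idx3 (fst p) + idx3 (snd p)) ! (3 * idx3 (fst q) + idx3 (snd q))))"

end

theory Submission
  imports Defs
begin

definition bf :: "complex^'n^'n \<Rightarrow> complex^'n \<Rightarrow> complex^'n \<Rightarrow> complex" where
  "bf M x y = (\<Sum>r\<in>UNIV. \<Sum>c\<in>UNIV. cnj (x $ r) * M $ r $ c * y $ c)"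

lemma psd_iff: "psd M \<longleftrightarrow> hermitian_mat M \<and> (\<forall>x. 0 \<le> Re (bf M x x))"
  by (simp add: psd_def bf_def)

lemma bf_herm:
  assumes "hermitian_mat M" shows "bf M x y = cnj (bf M y x)"
proof -
  have "bf M x y = (\<Sum>r\<in>UNIV. \<Sum>c\<in>UNIV. cnj (x $ r) * cnj (M $ c $ r) * y $ c)"
    using assms unfolding bf_def hermitian_mat_def by (intro sum.cong refl) metis
  also have "\<dots> = (\<Sum>c\<in>UNIV. \<Sum>r\<in>UNIV. cnj (x $ r) * cnj (M $ c $ r) * y $ c)"
    by (rule sum.swap)
  also have "\<dots> = cnj (bf M y x)"
    unfolding bf_def by (simp add: mult.commute mult.left_commute)
  finally show ?thesis .
qed

lemma bf_comb:
  "bf M (\<chi> i. v $ i + s * w $ i) (\<chi> i. v $ i + s * w $ i)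
   = bf M v v + s * bf M v w + cnj s * bf M w v + cnj s * s * bf M w w"
proof -
  have "bf M (\<chi> i. v $ i + s * w $ i) (\<chi> i. v $ i + s * w $ i) =
     (\<Sum>r\<in>UNIV. \<Sum>c\<in>UNIV. cnj (v $ r) * M $ r $ c * v $ c + s * (cnj (v $ r) * M $ r $ c * w $ c)
        + cnj s * (cnj (w $ r) * M $ r $ c * v $ c) + cnj s * s * (cnj (w $ r) * M $ r $ c * w $ c))"
    unfolding bf_def by (simp add: algebra_simps)
  also have "\<dots> = bf M v v + s * bf M v w + cnj s * bf M w v + cnj s * s * bf M w w"
    unfolding bf_def by (simp add: sum.distrib sum_distrib_left)
  finally show ?thesis .
qed

lemma psd_null:
  assumes "psd M" "Re (bf M v v) = 0"
  shows "bf M w v = 0"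
proof (rule ccontr)
  assume nz: "bf M w v \<noteq> 0"
  define z where "z = bf M w v"
  define q where "q = Re (bf M w w)"
  have h: "hermitian_mat M" and pos: "\<And>x. 0 \<le> Re (bf M x x)" using assms(1) by (auto simp: psd_iff)
  have vw: "bf M v w = cnj z" using bf_herm[OF h, of v w] z_def by simp
  define t :: real where "t = 1 / (\<bar>q\<bar> + 1)"
  have tpos: "t > 0" by (simp add: t_def add_pos_nonneg)
  have tq: "t * q < 1"
  proof -
    have "t * q \<le> t * \<bar>q\<bar>" using tpos by (simp add: mult_left_mono)
    also have "\<dots> < 1" using tpos by (simp add: t_def field_simps)
    finally show ?thesis .
  qed
  define s where "s = - (complex_of_real t * z)"
  have "0 \<le> Re (bf M (\<chi> i. v $ i + s * w $ i) (\<chi> i. v $ i + s * w $ i))" by (rule pos)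
  also have "Re (bf M (\<chi> i. v $ i + s * w $ i) (\<chi> i. v $ i + s * w $ i))
      = Re (bf M v v) + Re (s * cnj z + cnj s * z) + Re (cnj s * s) * q"
    unfolding bf_comb vw q_def
    by (simp add: s_def z_def)
  also have "\<dots> = ((Re z)\<^sup>2 + (Im z)\<^sup>2) * (t * (t * q - 2))"
  proof -
    have e1: "Re (s * cnj z + cnj s * z) = - 2 * t * ((Re z)\<^sup>2 + (Im z)\<^sup>2)"
      by (simp add: s_def power2_eq_square algebra_simps)
    have e2: "Re (cnj s * s) = t * t * ((Re z)\<^sup>2 + (Im z)\<^sup>2)"
      by (simp add: s_def power2_eq_square algebra_simps)
    show ?thesis unfolding e1 e2 using assms(2) by (simp add: algebra_simps)
  qed
  finally have ge: "0 \<le> ((Re z)\<^sup>2 + (Im z)\<^sup>2) * (t * (t * q - 2))" .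
  have p1: "(Re z)\<^sup>2 + (Im z)\<^sup>2 > 0" using nz z_def by (metis complex_eq_iff zero_complex.sel sum_power2_gt_zero_iff)
  have p2: "t * (t * q - 2) < 0" using tpos tq by (simp add: mult_pos_neg)
  have lt: "((Re z)\<^sup>2 + (Im z)\<^sup>2) * (t * (t * q - 2)) < 0" by (rule mult_pos_neg[OF p1 p2])
  show False using leD[OF ge] lt by contradiction
qed

lemma bf_axis_left: "bf M (axis r 1) v = (\<Sum>c\<in>UNIV. M $ r $ c * v $ c)"
proof -
  have "bf M (axis r 1) v = (\<Sum>ra\<in>UNIV. if ra = r then (\<Sum>c\<in>UNIV. M $ ra $ c * v $ c) else 0)"
    unfolding bf_def by (rule sum.cong) (auto simp: axis_def)
  then show ?thesis by simp
qed

lemma bf_axis_right: "bf M v (axis c 1) = (\<Sum>r\<in>UNIV. cnj (v $ r) * M $ r $ c)"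
proof -
  have "bf M v (axis c 1) = (\<Sum>r\<in>UNIV. \<Sum>ca\<in>UNIV. if ca = c then cnj (v $ r) * M $ r $ ca else 0)"
    unfolding bf_def by (intro sum.cong refl) (auto simp: axis_def)
  then show ?thesis by simp
qed

lemma psd_null_row:
  assumes "psd M" "Re (bf M v v) = 0"
  shows "(\<Sum>c\<in>UNIV. M $ r $ c * v $ c) = 0"
  using psd_null[OF assms, of "axis r 1"] by (simp add: bf_axis_left)

lemma psd_null_col:
  assumes "psd M" "Re (bf M v v) = 0"
  shows "(\<Sum>r\<in>UNIV. cnj (v $ r) * M $ r $ c) = 0"
proof -
  have h: "hermitian_mat M" using assms(1) by (simp add: psd_iff)
  have "bf M v (axis c 1) = 0" using bf_herm[OF h, of v "axis c 1"] psd_null[OF assms, of "axis c 1"] by simp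
  then show ?thesis by (simp add: bf_axis_right)
qed



lemma U3: "(UNIV::3 set) = {0,1,2}"
proof -
  have "x \<in> {0,1,2}" for x :: 3
    using exhaust_3[of x] by auto
  then show ?thesis by auto
qed

lemma all3: "(\<forall>i::3. P i) \<longleftrightarrow> P 0 \<and> P 1 \<and> P 2"
  using U3 by (metis UNIV_I insertE singletonD)

lemma cases3: obtains "x = (0::3)" | "x = 1" | "x = 2"
  using exhaust_3[of x] by auto

lemma mat_eqI: "(\<And>p q. X $ p $ q = Y $ p $ q) \<Longrightarrow> X = Y"
  by (simp add: vec_eq_iff)

lemma sum3: "sum f (UNIV::3 set) = f 0 + f 1 + f 2"
  unfolding U3 by (simp add: add.assoc)

lemma sum9: "sum f (UNIV::(3\<times>3) set) =
  f (0,0) + f (0,1) + f (0,2) + f (1,0) + f (1,1) + f (1,2) + f (2,0) + f (2,1) + f (2,2)"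
proof -
  have "sum f (UNIV::(3\<times>3) set) = sum (case_prod (\<lambda>x y. f (x,y))) (UNIV \<times> UNIV)" by simp
  also have "\<dots> = (\<Sum>x\<in>UNIV. \<Sum>y\<in>UNIV. f (x,y))" by (rule sum.cartesian_product[symmetric])
  finally show ?thesis by (simp add: sum3 add.assoc)
qed

lemma idx3_simps[simp]: "idx3 0 = 0" "idx3 1 = 1" "idx3 2 = 2"
  by (simp_all add: idx3_def)

lemma Amat_entry: "Amat lam $ (i,k) $ (j,l) = complex_of_real (Aentries lam ! (3 * idx3 i + idx3 k) ! (3 * idx3 j + idx3 l))"
  by (simp add: Amat_def)

lemma Amat_tab[simp]:
  "Amat lam $ (0,0) $ (0,0) = 1"
  "Amat lam $ (0,0) $ (0,1) = 0"
  "Amat lam $ (0,0) $ (0,2) = 0"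
  "Amat lam $ (0,0) $ (1,0) = 0"
  "Amat lam $ (0,0) $ (1,1) = 1"
  "Amat lam $ (0,0) $ (1,2) = 0"
  "Amat lam $ (0,0) $ (2,0) = 0"
  "Amat lam $ (0,0) $ (2,1) = 0"
  "Amat lam $ (0,0) $ (2,2) = 1"
  "Amat lam $ (0,1) $ (0,0) = 0"
  "Amat lam $ (0,1) $ (0,1) = (complex_of_real lam)\<^sup>2"
  "Amat lam $ (0,1) $ (0,2) = 0"
  "Amat lam $ (0,1) $ (1,0) = 1"
  "Amat lam $ (0,1) $ (1,1) = 0"
  "Amat lam $ (0,1) $ (1,2) = 0"
  "Amat lam $ (0,1) $ (2,0) = 0"
  "Amat lam $ (0,1) $ (2,1) = 0"
  "Amat lam $ (0,1) $ (2,2) = 0"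
  "Amat lam $ (0,2) $ (0,0) = 0"
  "Amat lam $ (0,2) $ (0,1) = 0"
  "Amat lam $ (0,2) $ (0,2) = (1 / complex_of_real lam)\<^sup>2"
  "Amat lam $ (0,2) $ (1,0) = 0"
  "Amat lam $ (0,2) $ (1,1) = 0"
  "Amat lam $ (0,2) $ (1,2) = 0"
  "Amat lam $ (0,2) $ (2,0) = 1"
  "Amat lam $ (0,2) $ (2,1) = 0"
  "Amat lam $ (0,2) $ (2,2) = 0"
  "Amat lam $ (1,0) $ (0,0) = 0"
  "Amat lam $ (1,0) $ (0,1) = 1"
  "Amat lam $ (1,0) $ (0,2) = 0"
  "Amat lam $ (1,0) $ (1,0) = (1 / complex_of_real lam)\<^sup>2"
  "Amat lam $ (1,0) $ (1,1) = 0"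
  "Amat lam $ (1,0) $ (1,2) = 0"
  "Amat lam $ (1,0) $ (2,0) = 0"
  "Amat lam $ (1,0) $ (2,1) = 0"
  "Amat lam $ (1,0) $ (2,2) = 0"
  "Amat lam $ (1,1) $ (0,0) = 1"
  "Amat lam $ (1,1) $ (0,1) = 0"
  "Amat lam $ (1,1) $ (0,2) = 0"
  "Amat lam $ (1,1) $ (1,0) = 0"
  "Amat lam $ (1,1) $ (1,1) = 1"
  "Amat lam $ (1,1) $ (1,2) = 0"
  "Amat lam $ (1,1) $ (2,0) = 0"
  "Amat lam $ (1,1) $ (2,1) = 0"
  "Amat lam $ (1,1) $ (2,2) = 1"
  "Amat lam $ (1,2) $ (0,0) = 0"
  "Amat lam $ (1,2) $ (0,1) = 0"
  "Amat lam $ (1,2) $ (0,2) = 0"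
  "Amat lam $ (1,2) $ (1,0) = 0"
  "Amat lam $ (1,2) $ (1,1) = 0"
  "Amat lam $ (1,2) $ (1,2) = (complex_of_real lam)\<^sup>2"
  "Amat lam $ (1,2) $ (2,0) = 0"
  "Amat lam $ (1,2) $ (2,1) = 1"
  "Amat lam $ (1,2) $ (2,2) = 0"
  "Amat lam $ (2,0) $ (0,0) = 0"
  "Amat lam $ (2,0) $ (0,1) = 0"
  "Amat lam $ (2,0) $ (0,2) = 1"
  "Amat lam $ (2,0) $ (1,0) = 0"
  "Amat lam $ (2,0) $ (1,1) = 0"
  "Amat lam $ (2,0) $ (1,2) = 0"
  "Amat lam $ (2,0) $ (2,0) = (complex_of_real lam)\<^sup>2"
  "Amat lam $ (2,0) $ (2,1) = 0"
  "Amat lam $ (2,0) $ (2,2) = 0"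
  "Amat lam $ (2,1) $ (0,0) = 0"
  "Amat lam $ (2,1) $ (0,1) = 0"
  "Amat lam $ (2,1) $ (0,2) = 0"
  "Amat lam $ (2,1) $ (1,0) = 0"
  "Amat lam $ (2,1) $ (1,1) = 0"
  "Amat lam $ (2,1) $ (1,2) = 1"
  "Amat lam $ (2,1) $ (2,0) = 0"
  "Amat lam $ (2,1) $ (2,1) = (1 / complex_of_real lam)\<^sup>2"
  "Amat lam $ (2,1) $ (2,2) = 0"
  "Amat lam $ (2,2) $ (0,0) = 1"
  "Amat lam $ (2,2) $ (0,1) = 0"
  "Amat lam $ (2,2) $ (0,2) = 0"
  "Amat lam $ (2,2) $ (1,0) = 0"
  "Amat lam $ (2,2) $ (1,1) = 1"
  "Amat lam $ (2,2) $ (1,2) = 0"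
  "Amat lam $ (2,2) $ (2,0) = 0"
  "Amat lam $ (2,2) $ (2,1) = 0"
  "Amat lam $ (2,2) $ (2,2) = 1"
  by (simp_all add: Amat_entry Aentries_def Let_def)

lemma ptrans_A: "ptrans (Amat lam) = Amat lam"
  unfolding vec_eq_iff ptrans_def
  by (simp add: split_paired_all all3)



definition outer :: "complex^'n \<Rightarrow> complex^'n^'n" where
  "outer w = (\<chi> r c. w $ r * cnj (w $ c))"

lemma bf_row: "bf M x y = (\<Sum>r\<in>UNIV. cnj (x $ r) * (\<Sum>c\<in>UNIV. M $ r $ c * y $ c))"
  unfolding bf_def by (simp add: sum_distrib_left mult.assoc)

lemma bf_add: "bf (M + N) x y = bf M x y + bf N x y"
  unfolding bf_def by (simp add: algebra_simps sum.distrib)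

lemma scale_entry: "(c *\<^sub>R M) $ r $ k = complex_of_real c * M $ r $ k"
  by (simp only: vector_scaleR_component) (simp only: scaleR_conv_of_real)

lemma bf_scale: "bf (c *\<^sub>R M) x y = complex_of_real c * bf M x y"
  unfolding bf_def scale_entry by (simp add: sum_distrib_left algebra_simps)

lemma psd_outer: "psd (outer w)"
proof -
  have h: "hermitian_mat (outer w)" by (simp add: hermitian_mat_def outer_def)
  have "Re (bf (outer w) x x) \<ge> 0" for x
  proof -
    define s where "s = (\<Sum>r\<in>UNIV. cnj (x $ r) * w $ r)"
    have "s * cnj s = (\<Sum>r\<in>UNIV. \<Sum>c\<in>UNIV. (cnj (x$r) * w$r) * (x$c * cnj (w$c)))"
      unfolding s_def by (simp add: sum_product)
    also have "\<dots> = bf (outer w) x x"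
      unfolding bf_def outer_def by (simp add: ac_simps)
    finally have "bf (outer w) x x = s * cnj s" by simp
    moreover have "Re (s * cnj s) \<ge> 0" by (simp only: complex_mult_cnj Re_complex_of_real) simp
    ultimately show ?thesis by simp
  qed
  with h show ?thesis by (simp add: psd_iff)
qed

lemma herm_add: "hermitian_mat M \<Longrightarrow> hermitian_mat N \<Longrightarrow> hermitian_mat (M + N)"
  unfolding hermitian_mat_def by (metis complex_cnj_add vector_add_component)

lemma herm_scale: "hermitian_mat M \<Longrightarrow> hermitian_mat (c *\<^sub>R M)"
  unfolding hermitian_mat_def scale_entry by (metis complex_cnj_complex_of_real complex_cnj_mult)

lemma psd_add: "psd M \<Longrightarrow> psd N \<Longrightarrow> psd (M + N)"
  by (simp add: psd_iff bf_add herm_add)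

lemma psd_scale: "0 \<le> c \<Longrightarrow> psd M \<Longrightarrow> psd (c *\<^sub>R M)"
  by (simp add: psd_iff bf_scale herm_scale)

lemma psd_zero: "psd 0"
  by (simp add: psd_iff bf_def hermitian_mat_def)

lemma ptrans_add: "ptrans (M + N) = ptrans M + ptrans N"
  by (simp add: ptrans_def vec_eq_iff)

lemma ptrans_scale: "ptrans (c *\<^sub>R M) = c *\<^sub>R ptrans M"
  by (simp add: ptrans_def vec_eq_iff)

lemma ptrans_zero: "ptrans 0 = 0"
  by (simp add: ptrans_def vec_eq_iff)

lemma ptrans_entry: "ptrans M $ r $ c = M $ (fst c, snd r) $ (fst r, snd c)"
  by (simp add: ptrans_def)

definition u0 :: "complex^(3\<times>3)" where
  "u0 = (\<chi> p. if p = (0,0) \<or> p = (1,1) \<or> p = (2,2) then 1 else 0)"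
definition u1 :: "real \<Rightarrow> complex^(3\<times>3)" where
  "u1 lam = (\<chi> p. if p = (0,1) then complex_of_real lam else if p = (1,0) then complex_of_real (1/lam) else 0)"
definition u2 :: "real \<Rightarrow> complex^(3\<times>3)" where
  "u2 lam = (\<chi> p. if p = (0,2) then complex_of_real (1/lam) else if p = (2,0) then complex_of_real lam else 0)"
definition u3 :: "real \<Rightarrow> complex^(3\<times>3)" where
  "u3 lam = (\<chi> p. if p = (1,2) then complex_of_real lam else if p = (2,1) then complex_of_real (1/lam) else 0)"

lemma A_decomp_00: "lam \<noteq> 0 \<Longrightarrow> \<forall>j l. Amat lam $ (0,0) $ (j,l) = (outer u0 + outer (u1 lam) + outer (u2 lam) + outer (u3 lam)) $ (0,0) $ (j,l)"
  unfolding all3 by (simp add: outer_def u0_def u1_def u2_def u3_def power2_eq_square)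

lemma A_decomp_01: "lam \<noteq> 0 \<Longrightarrow> \<forall>j l. Amat lam $ (0,1) $ (j,l) = (outer u0 + outer (u1 lam) + outer (u2 lam) + outer (u3 lam)) $ (0,1) $ (j,l)"
  unfolding all3 by (simp add: outer_def u0_def u1_def u2_def u3_def power2_eq_square)

lemma A_decomp_02: "lam \<noteq> 0 \<Longrightarrow> \<forall>j l. Amat lam $ (0,2) $ (j,l) = (outer u0 + outer (u1 lam) + outer (u2 lam) + outer (u3 lam)) $ (0,2) $ (j,l)"
  unfolding all3 by (simp add: outer_def u0_def u1_def u2_def u3_def power2_eq_square)

lemma A_decomp_10: "lam \<noteq> 0 \<Longrightarrow> \<forall>j l. Amat lam $ (1,0) $ (j,l) = (outer u0 + outer (u1 lam) + outer (u2 lam) + outer (u3 lam)) $ (1,0) $ (j,l)"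
  unfolding all3 by (simp add: outer_def u0_def u1_def u2_def u3_def power2_eq_square)

lemma A_decomp_11: "lam \<noteq> 0 \<Longrightarrow> \<forall>j l. Amat lam $ (1,1) $ (j,l) = (outer u0 + outer (u1 lam) + outer (u2 lam) + outer (u3 lam)) $ (1,1) $ (j,l)"
  unfolding all3 by (simp add: outer_def u0_def u1_def u2_def u3_def power2_eq_square)

lemma A_decomp_12: "lam \<noteq> 0 \<Longrightarrow> \<forall>j l. Amat lam $ (1,2) $ (j,l) = (outer u0 + outer (u1 lam) + outer (u2 lam) + outer (u3 lam)) $ (1,2) $ (j,l)"
  unfolding all3 by (simp add: outer_def u0_def u1_def u2_def u3_def power2_eq_square)

lemma A_decomp_20: "lam \<noteq> 0 \<Longrightarrow> \<forall>j l. Amat lam $ (2,0) $ (j,l) = (outer u0 + outer (u1 lam) + outer (u2 lam) + outer (u3 lam)) $ (2,0) $ (j,l)"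
  unfolding all3 by (simp add: outer_def u0_def u1_def u2_def u3_def power2_eq_square)

lemma A_decomp_21: "lam \<noteq> 0 \<Longrightarrow> \<forall>j l. Amat lam $ (2,1) $ (j,l) = (outer u0 + outer (u1 lam) + outer (u2 lam) + outer (u3 lam)) $ (2,1) $ (j,l)"
  unfolding all3 by (simp add: outer_def u0_def u1_def u2_def u3_def power2_eq_square)

lemma A_decomp_22: "lam \<noteq> 0 \<Longrightarrow> \<forall>j l. Amat lam $ (2,2) $ (j,l) = (outer u0 + outer (u1 lam) + outer (u2 lam) + outer (u3 lam)) $ (2,2) $ (j,l)"
  unfolding all3 by (simp add: outer_def u0_def u1_def u2_def u3_def power2_eq_square)

lemma A_decomp:
  assumes "lam \<noteq> 0"
  shows "Amat lam = outer u0 + outer (u1 lam) + outer (u2 lam) + outer (u3 lam)"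
proof -
  have *: "\<forall>i k j l. Amat lam $ (i,k) $ (j,l) = (outer u0 + outer (u1 lam) + outer (u2 lam) + outer (u3 lam)) $ (i,k) $ (j,l)"
    using A_decomp_00[OF assms] A_decomp_01[OF assms] A_decomp_02[OF assms] A_decomp_10[OF assms] A_decomp_11[OF assms] A_decomp_12[OF assms]
      A_decomp_20[OF assms] A_decomp_21[OF assms] A_decomp_22[OF assms]
    unfolding all3 by blast
  show ?thesis
  proof (intro mat_eqI)
    fix p q :: "3 \<times> 3"
    obtain i k j l where pq: "p = (i,k)" "q = (j,l)" by (cases p, cases q) auto
    show "Amat lam $ p $ q = (outer u0 + outer (u1 lam) + outer (u2 lam) + outer (u3 lam)) $ p $ q"
      unfolding pq by (rule *[rule_format])
  qed
qed

lemma psd_A: "lam \<noteq> 0 \<Longrightarrow> psd (Amat lam)"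
  by (simp add: A_decomp psd_add psd_outer)

lemma A_in_T: "lam \<noteq> 0 \<Longrightarrow> Amat lam \<in> coneT"
  by (simp add: coneT_def psd_A ptrans_A)



definition kv1 :: "complex^(3\<times>3)" where
  "kv1 = (\<chi> p. if p = (0,0) then 1 else if p = (1,1) then -1 else 0)"
definition kv2 :: "complex^(3\<times>3)" where
  "kv2 = (\<chi> p. if p = (1,1) then 1 else if p = (2,2) then -1 else 0)"
definition kv3 :: "complex \<Rightarrow> complex^(3\<times>3)" where
  "kv3 a = (\<chi> p. if p = (0,1) then 1 else if p = (1,0) then - a else 0)"
definition kv4 :: "complex \<Rightarrow> complex^(3\<times>3)" where
  "kv4 a = (\<chi> p. if p = (2,0) then 1 else if p = (0,2) then - a else 0)"
definition kv5 :: "complex \<Rightarrow> complex^(3\<times>3)" where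
  "kv5 a = (\<chi> p. if p = (1,2) then 1 else if p = (2,1) then - a else 0)"

lemma allpair: "(\<forall>i k. P (i,k)) \<Longrightarrow> P r"
  by (cases r) auto

lemma A_null:
  assumes "lam \<noteq> 0"
  shows "(\<Sum>c\<in>UNIV. Amat lam $ r $ c * kv1 $ c) = 0"
    "(\<Sum>c\<in>UNIV. Amat lam $ r $ c * kv2 $ c) = 0"
    "(\<Sum>c\<in>UNIV. Amat lam $ r $ c * kv3 ((complex_of_real lam)\<^sup>2) $ c) = 0"
    "(\<Sum>c\<in>UNIV. Amat lam $ r $ c * kv4 ((complex_of_real lam)\<^sup>2) $ c) = 0"
    "(\<Sum>c\<in>UNIV. Amat lam $ r $ c * kv5 ((complex_of_real lam)\<^sup>2) $ c) = 0"
  using assms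
  by (rule_tac[!] allpair, unfold all3; simp add: sum9 kv1_def kv2_def kv3_def kv4_def kv5_def power2_eq_square field_simps)+

lemma null_part:
  assumes "psd B" "psd C" "A' = B + C" "\<And>r. (\<Sum>c\<in>UNIV. A' $ r $ c * v $ c) = 0"
  shows "Re (bf B v v) = 0"
proof -
  have "bf A' v v = 0" unfolding bf_row assms(4) by simp
  then have "bf B v v + bf C v v = 0" using assms(3) by (simp add: bf_add)
  then have "Re (bf B v v + bf C v v) = 0" by simp
  then have "Re (bf B v v) + Re (bf C v v) = 0" by simp
  moreover have "Re (bf B v v) \<ge> 0" "Re (bf C v v) \<ge> 0" using assms(1,2) by (auto simp: psd_iff)
  ultimately show ?thesis by linarith
qed

lemma lam6: "(lam::real) > 0 \<Longrightarrow> lam \<noteq> 1 \<Longrightarrow> lam ^ 6 \<noteq> 1"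
proof -
  assume "lam > 0" "lam \<noteq> 1"
  show ?thesis
  proof (cases "lam < 1")
    case True then have "lam ^ 6 < 1" using \<open>lam > 0\<close> by (simp add: power_less_one_iff)
    then show ?thesis by simp
  next
    case False then have "1 < lam" using \<open>lam \<noteq> 1\<close> by simp
    then have "1 < lam ^ 6" by (intro one_less_power) auto
    then show ?thesis by simp
  qed
qed

lemma cancel1: "(x::complex) = c * x \<Longrightarrow> c \<noteq> 1 \<Longrightarrow> x = 0"
proof -
  assume "x = c * x" "c \<noteq> 1"
  then have "(1 - c) * x = 0" by (simp add: algebra_simps)
  then show "x = 0" using \<open>c \<noteq> 1\<close> by simp
qed

lemma ext_core:
  assumes lam: "lam > 0" "lam \<noteq> 1"
    and BT: "B \<in> coneT" and CT: "C \<in> coneT" and eq: "Amat lam = B + C"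
  shows "\<forall>i k j l. B $ (i,k) $ (j,l) = B $ (0,0) $ (0,0) * Amat lam $ (i,k) $ (j,l)"
proof -
  define a where "a = (complex_of_real lam)\<^sup>2"
  have lam0: "lam \<noteq> 0" using lam by simp
  have a0: "a \<noteq> 0" using lam0 by (simp add: a_def)
  have a3: "a ^ 3 \<noteq> 1"
  proof -
    have "a ^ 3 = complex_of_real (lam ^ 6)" by (simp add: a_def flip: power_mult)
    then show ?thesis using lam6[OF lam] by (simp only: of_real_eq_1_iff) simp
  qed
  have pB: "psd B" and ptB: "psd (ptrans B)" and pC: "psd C" and ptC: "psd (ptrans C)"
    using BT CT by (auto simp: coneT_def)
  have eqt: "Amat lam = ptrans B + ptrans C"
    using eq ptrans_A[of lam] ptrans_add[of B C] by simp
  note An = A_null[OF lam0, folded a_def]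
  have nB1: "Re (bf B kv1 kv1) = 0" by (rule null_part[OF pB pC eq An(1)])
  have nB2: "Re (bf B kv2 kv2) = 0" by (rule null_part[OF pB pC eq An(2)])
  have nB3: "Re (bf B (kv3 a) (kv3 a)) = 0" by (rule null_part[OF pB pC eq An(3)])
  have nB4: "Re (bf B (kv4 a) (kv4 a)) = 0" by (rule null_part[OF pB pC eq An(4)])
  have nB5: "Re (bf B (kv5 a) (kv5 a)) = 0" by (rule null_part[OF pB pC eq An(5)])
  have nT1: "Re (bf (ptrans B) kv1 kv1) = 0" by (rule null_part[OF ptB ptC eqt An(1)])
  have nT2: "Re (bf (ptrans B) kv2 kv2) = 0" by (rule null_part[OF ptB ptC eqt An(2)])
  have nT3: "Re (bf (ptrans B) (kv3 a) (kv3 a)) = 0" by (rule null_part[OF ptB ptC eqt An(3)])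
  have nT4: "Re (bf (ptrans B) (kv4 a) (kv4 a)) = 0" by (rule null_part[OF ptB ptC eqt An(4)])
  have nT5: "Re (bf (ptrans B) (kv5 a) (kv5 a)) = 0" by (rule null_part[OF ptB ptC eqt An(5)])
  have c1: "B $ r $ (1,1) = B $ r $ (0,0)" for r
    using psd_null_row[OF pB nB1, of r] by (simp add: sum9 kv1_def)
  have c2: "B $ r $ (2,2) = B $ r $ (0,0)" for r
    using psd_null_row[OF pB nB2, of r] by (simp add: sum9 kv2_def c1)
  have c3: "B $ r $ (0,1) = a * B $ r $ (1,0)" for r
    using psd_null_row[OF pB nB3, of r] by (simp add: sum9 kv3_def algebra_simps)
  have c4: "B $ r $ (2,0) = a * B $ r $ (0,2)" for r
    using psd_null_row[OF pB nB4, of r] by (simp add: sum9 kv4_def algebra_simps)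
  have c5: "B $ r $ (1,2) = a * B $ r $ (2,1)" for r
    using psd_null_row[OF pB nB5, of r] by (simp add: sum9 kv5_def algebra_simps)
  have r1: "B $ (1,1) $ c = B $ (0,0) $ c" for c
    using psd_null_col[OF pB nB1, of c] by (simp add: sum9 kv1_def)
  have r2: "B $ (2,2) $ c = B $ (0,0) $ c" for c
    using psd_null_col[OF pB nB2, of c] by (simp add: sum9 kv2_def r1)
  have ca: "cnj a = a" by (simp add: a_def)
  then have r3: "B $ (0,1) $ c = a * B $ (1,0) $ c" for c
    using psd_null_col[OF pB nB3, of c] by (simp add: sum9 kv3_def algebra_simps)
  have r4: "B $ (2,0) $ c = a * B $ (0,2) $ c" for c
    using psd_null_col[OF pB nB4, of c] \<open>cnj a = a\<close> by (simp add: sum9 kv4_def algebra_simps)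
  have r5: "B $ (1,2) $ c = a * B $ (2,1) $ c" for c
    using psd_null_col[OF pB nB5, of c] \<open>cnj a = a\<close> by (simp add: sum9 kv5_def algebra_simps)
  note R = c1 c2 c3 c4 c5 r1 r2 r3 r4 r5
  have d1: "B $ (0,0) $ (0,0) = a * B $ (1,0) $ (1,0)"
    using psd_null_row[OF ptB nT3, of "(1,0)"] ca by (simp add: sum9 kv3_def ptrans_entry R power2_eq_square power3_eq_cube algebra_simps)
  have d2: "B $ (0,0) $ (0,0) = a * B $ (0,2) $ (0,2)"
    using psd_null_row[OF ptB nT4, of "(0,2)"] ca by (simp add: sum9 kv4_def ptrans_entry R power2_eq_square power3_eq_cube algebra_simps)
  have d3: "B $ (0,0) $ (0,0) = a * B $ (2,1) $ (2,1)"
    using psd_null_row[OF ptB nT5, of "(2,1)"] ca by (simp add: sum9 kv5_def ptrans_entry R power2_eq_square power3_eq_cube algebra_simps)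
  have g1a: "B $ (1,0) $ (0,0) = a^2 * B $ (0,2) $ (2,1)"
    using psd_null_row[OF ptB nT2, of "(1,0)"] ca by (simp add: sum9 kv2_def ptrans_entry R power2_eq_square power3_eq_cube algebra_simps)
  have g1b: "B $ (1,0) $ (0,0) = a^2 * B $ (2,1) $ (0,2)"
    using psd_null_col[OF ptB nT4, of "(1,2)"] ca by (simp add: sum9 kv4_def ptrans_entry R power2_eq_square power3_eq_cube algebra_simps)
  have g1c: "B $ (0,2) $ (2,1) = a^3 * B $ (2,1) $ (0,2)"
    using psd_null_row[OF ptB nT3, of "(2,2)"] ca by (simp add: sum9 kv3_def ptrans_entry R power2_eq_square power3_eq_cube algebra_simps)
  have g1d: "B $ (0,0) $ (1,0) = B $ (1,0) $ (0,0)"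
    using psd_null_row[OF ptB nT1, of "(1,0)"] ca by (simp add: sum9 kv1_def ptrans_entry R power2_eq_square power3_eq_cube algebra_simps)
  have g2a: "a * B $ (0,2) $ (0,0) = B $ (2,1) $ (1,0)"
    using psd_null_col[OF ptB nT1, of "(2,0)"] ca by (simp add: sum9 kv1_def ptrans_entry R power2_eq_square power3_eq_cube algebra_simps)
  have g2b: "B $ (0,0) $ (0,2) = a^2 * B $ (2,1) $ (1,0)"
    using psd_null_row[OF ptB nT5, of "(0,1)"] ca by (simp add: sum9 kv5_def ptrans_entry R power2_eq_square power3_eq_cube algebra_simps)
  have g2c: "a * B $ (0,2) $ (0,0) = a * B $ (0,0) $ (0,2)"
    using psd_null_row[OF ptB nT4, of "(0,0)"] ca by (simp add: sum9 kv4_def ptrans_entry R power2_eq_square power3_eq_cube algebra_simps)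
  have g2d: "B $ (0,0) $ (0,2) = a^2 * B $ (1,0) $ (2,1)"
    using psd_null_col[OF ptB nT1, of "(0,2)"] ca by (simp add: sum9 kv1_def ptrans_entry R power2_eq_square power3_eq_cube algebra_simps)
  have g3a: "B $ (0,0) $ (2,1) = B $ (2,1) $ (0,0)"
    using psd_null_row[OF ptB nT2, of "(2,1)"] ca by (simp add: sum9 kv2_def ptrans_entry R power2_eq_square power3_eq_cube algebra_simps)
  have g3b: "a^2 * B $ (1,0) $ (0,2) = B $ (0,0) $ (2,1)"
    using psd_null_row[OF ptB nT1, of "(2,1)"] ca by (simp add: sum9 kv1_def ptrans_entry R power2_eq_square power3_eq_cube algebra_simps)
  have g3c: "B $ (1,0) $ (0,2) = a^3 * B $ (0,2) $ (1,0)"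
    using psd_null_row[OF ptB nT5, of "(0,0)"] ca by (simp add: sum9 kv5_def ptrans_entry R power2_eq_square power3_eq_cube algebra_simps)
  have g3d: "B $ (2,1) $ (0,0) = a^2 * B $ (1,0) $ (0,2)"
    using psd_null_row[OF ptB nT4, of "(0,1)"] ca by (simp add: sum9 kv4_def ptrans_entry R power2_eq_square power3_eq_cube algebra_simps)
  have g3e: "B $ (2,1) $ (0,0) = a^2 * B $ (0,2) $ (1,0)"
    using psd_null_col[OF ptB nT3, of "(2,0)"] ca by (simp add: sum9 kv3_def ptrans_entry R power2_eq_square power3_eq_cube algebra_simps)
  have z1: "B $ (0,2) $ (2,1) = 0"
  proof -
    have "a^2 * B $ (0,2) $ (2,1) = a^2 * B $ (2,1) $ (0,2)" by (metis g1a g1b)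
    then have "B $ (0,2) $ (2,1) = B $ (2,1) $ (0,2)" using a0 by simp
    then have "B $ (0,2) $ (2,1) = a^3 * B $ (0,2) $ (2,1)" using g1c by metis
    then show ?thesis using a3 by (rule cancel1)
  qed
  have z2: "B $ (2,1) $ (0,2) = 0" using z1 g1c a0 by simp
  have z3: "B $ (1,0) $ (0,0) = 0" using g1a z1 by simp
  have z4: "B $ (0,0) $ (1,0) = 0" using g1d z3 by simp
  have z5: "B $ (0,0) $ (0,2) = 0"
  proof -
    have "B $ (0,2) $ (0,0) = B $ (0,0) $ (0,2)" using g2c a0 by simp
    then have "B $ (0,0) $ (0,2) = a^3 * B $ (0,0) $ (0,2)" using g2a g2b
      by (simp add: power3_eq_cube power2_eq_square algebra_simps)
    then show ?thesis using a3 by (rule cancel1)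
  qed
  have z6: "B $ (0,2) $ (0,0) = 0" using g2c a0 z5 by simp
  have z7: "B $ (2,1) $ (1,0) = 0" using g2a z6 by simp
  have z8: "B $ (1,0) $ (2,1) = 0" using g2d z5 a0 by simp
  have z9: "B $ (1,0) $ (0,2) = 0"
  proof -
    have "a^2 * B $ (1,0) $ (0,2) = a^2 * B $ (0,2) $ (1,0)" by (metis g3d g3e)
    then have "B $ (1,0) $ (0,2) = B $ (0,2) $ (1,0)" using a0 by simp
    then have "B $ (1,0) $ (0,2) = a^3 * B $ (1,0) $ (0,2)" using g3c by metis
    then show ?thesis using a3 by (rule cancel1)
  qed
  have z10: "B $ (0,2) $ (1,0) = 0" using g3c z9 a0 by simp
  have z11: "B $ (0,0) $ (2,1) = 0" using g3b z9 by simp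
  have z12: "B $ (2,1) $ (0,0) = 0" using g3a z11 by simp
  note Z = z1 z2 z3 z4 z5 z6 z7 z8 z9 z10 z11 z12
  have dP: "B $ (1,0) $ (1,0) = B $ (0,0) $ (0,0) / a" using d1 a0 by (simp add: field_simps)
  have dQ: "B $ (0,2) $ (0,2) = B $ (0,0) $ (0,0) / a" using d2 a0 by (simp add: field_simps)
  have dR: "B $ (2,1) $ (2,1) = B $ (0,0) $ (0,0) / a" using d3 a0 by (simp add: field_simps)
  have binv: "(1 / complex_of_real lam)\<^sup>2 = 1 / a" by (simp add: a_def power_one_over)
  have la: "(complex_of_real lam)\<^sup>2 = a" by (simp add: a_def)
  show ?thesis unfolding all3
    by (simp add: R Z dP dQ dR binv la a0)
qed



lemma ext_ray:
  assumes lam: "lam > 0" "lam \<noteq> 1"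
    and BT: "B \<in> coneT" and CT: "C \<in> coneT" and eq: "Amat lam = B + C"
  shows "\<exists>b::real. b \<ge> 0 \<and> B = b *\<^sub>R Amat lam"
proof -
  have core: "\<forall>i k j l. B $ (i,k) $ (j,l) = B $ (0,0) $ (0,0) * Amat lam $ (i,k) $ (j,l)"
    by (rule ext_core[OF lam BT CT eq])
  define \<beta> where "\<beta> = B $ (0,0) $ (0,0)"
  have pB: "psd B" using BT by (simp add: coneT_def)
  then have h: "hermitian_mat B" by (simp add: psd_iff)
  have "\<beta> = cnj \<beta>" unfolding \<beta>_def using h[unfolded hermitian_mat_def, rule_format, of "(0,0)" "(0,0)"] .
  then have "Im \<beta> = Im (cnj \<beta>)" by (rule arg_cong)
  then have im: "Im \<beta> = 0" by simp
  then have breal: "\<beta> = complex_of_real (Re \<beta>)" by (simp add: complex_eq_iff)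
  have "0 \<le> Re (bf B (axis (0,0) 1) (axis (0,0) 1))" using pB by (simp add: psd_iff)
  moreover have "bf B (axis (0,0) 1) (axis (0,0) 1) = \<beta>"
    unfolding bf_axis_left \<beta>_def by (simp add: sum9 axis_def)
  ultimately have bnn: "Re \<beta> \<ge> 0" by simp
  have "B = Re \<beta> *\<^sub>R Amat lam"
  proof (intro mat_eqI)
    fix p q :: "3 \<times> 3"
    obtain i k j l where pq: "p = (i,k)" "q = (j,l)" by (cases p, cases q) auto
    have "B $ p $ q = \<beta> * Amat lam $ p $ q" unfolding pq \<beta>_def using core by blast
    also have "\<dots> = (Re \<beta> *\<^sub>R Amat lam) $ p $ q" unfolding scale_entry using breal by simp
    finally show "B $ p $ q = (Re \<beta> *\<^sub>R Amat lam) $ p $ q" .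
  qed
  with bnn show ?thesis by blast
qed

lemma ray_nz: "s \<noteq> 0 \<Longrightarrow> s *\<^sub>R Amat lam \<noteq> 0"
proof
  assume "s \<noteq> 0" "s *\<^sub>R Amat lam = 0"
  then have "(s *\<^sub>R Amat lam) $ (0,0) $ (0,0) = 0" by simp
  then show False using \<open>s \<noteq> 0\<close> by (simp add: scale_entry)
qed

lemma rank1_factor:
  fixes z :: "complex^3^3"
  assumes "rank z \<le> 1"
  shows "\<exists>u v. \<forall>i k. z $ i $ k = u $ i * v $ k"
proof -
  obtain Bs where Bs: "Bs \<subseteq> rows z" "vec.independent Bs" "rows z \<subseteq> vec.span Bs" "card Bs = vec.dim (rows z)"
    by (rule vec.basis_exists)
  have fin: "finite Bs" using Bs(2) by (rule vec.finiteI_independent)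
  have "card Bs \<le> 1" using Bs(4) assms by (simp add: row_rank_def_gen)
  then have all: "\<forall>a\<in>Bs. \<forall>b\<in>Bs. a = b" using card_le_Suc0_iff_eq[OF fin] by simp
  have "\<exists>w. Bs \<subseteq> {w}"
  proof (cases "Bs = {}")
    case True then show ?thesis by blast
  next
    case False then obtain x where "x \<in> Bs" by blast
    then have "Bs \<subseteq> {x}" using all by blast
    then show ?thesis by blast
  qed
  then obtain w where w: "Bs \<subseteq> {w}" by blast
  have "rows z \<subseteq> vec.span {w}" using Bs(3) vec.span_mono[OF w] by blast
  then have "rows z \<subseteq> range (\<lambda>c. c *s w)" by (simp add: vec.span_singleton)
  then have "\<forall>i. \<exists>c. row i z = c *s w" by (auto simp: rows_def)
  then obtain c where c: "\<And>i. row i z = c i *s w" by metis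
  have "z $ i $ k = (\<chi> i. c i) $ i * w $ k" for i k
  proof -
    have "row i z $ k = (c i *s w) $ k" by (simp add: c)
    then show ?thesis by (simp add: row_def)
  qed
  then show ?thesis by blast
qed

lemma ztilde_psd: "psd (ztilde_outer z)"
proof -
  have "ztilde_outer z = outer (\<chi> p. z $ fst p $ snd p)"
    by (simp add: ztilde_outer_def outer_def)
  then show ?thesis by (simp add: psd_outer)
qed

lemma ztilde_T:
  assumes "rank z \<le> 1" shows "ztilde_outer z \<in> coneT"
proof -
  obtain u v where uv: "\<And>i k. z $ i $ k = u $ i * v $ k" using rank1_factor[OF assms] by blast
  have "ptrans (ztilde_outer z) = outer (\<chi> p. cnj (u $ fst p) * v $ snd p)"
    by (intro mat_eqI) (simp add: ptrans_entry ztilde_outer_def outer_def uv ac_simps)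
  then show ?thesis using ztilde_psd psd_outer by (simp add: coneT_def)
qed

lemma ztilde_not_ray:
  assumes "s > 0" "lam \<noteq> 0"
  shows "ztilde_outer z \<noteq> s *\<^sub>R Amat lam"
proof
  assume eq: "ztilde_outer z = s *\<^sub>R Amat lam"
  have e1: "z $ 0 $ 0 * cnj (z $ 0 $ 0) = complex_of_real s"
    using arg_cong[OF eq, of "\<lambda>X. X $ (0,0) $ (0,0)"] by (simp only: scale_entry) (simp add: ztilde_outer_def)
  have e2: "z $ 0 $ 1 * cnj (z $ 0 $ 1) = complex_of_real s * (complex_of_real lam)\<^sup>2"
    using arg_cong[OF eq, of "\<lambda>X. X $ (0,1) $ (0,1)"] by (simp only: scale_entry) (simp add: ztilde_outer_def)
  have e3: "z $ 0 $ 0 * cnj (z $ 0 $ 1) = 0"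
    using arg_cong[OF eq, of "\<lambda>X. X $ (0,0) $ (0,1)"] by (simp only: scale_entry) (simp add: ztilde_outer_def)
  have "(z $ 0 $ 0 * cnj (z $ 0 $ 0)) * (z $ 0 $ 1 * cnj (z $ 0 $ 1))
      = (z $ 0 $ 0 * cnj (z $ 0 $ 1)) * cnj (z $ 0 $ 0 * cnj (z $ 0 $ 1))"
    by (simp add: ac_simps)
  then have "complex_of_real s * (complex_of_real s * (complex_of_real lam)\<^sup>2) = 0"
    unfolding e1 e2 e3 by simp
  then show False using assms by simp
qed

lemma notV1:
  assumes lam: "lam > 0" "lam \<noteq> 1"
  shows "Amat lam \<notin> coneV1"
proof -
  define D where "D = {X. X \<in> coneT \<and> (\<forall>s>0. X \<noteq> s *\<^sub>R Amat lam)}"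
  have lam0: "lam \<noteq> 0" using lam by simp
  have zT: "0 \<in> coneT" by (simp add: coneT_def psd_zero ptrans_zero)
  have "0 \<noteq> s *\<^sub>R Amat lam" if "s > 0" for s using ray_nz[of s lam] that by auto
  then have zD: "0 \<in> D" unfolding D_def using zT by blast
  have addD: "X + Y \<in> D" if X: "X \<in> D" and Y: "Y \<in> D" for X Y
  proof -
    have XT: "X \<in> coneT" and YT: "Y \<in> coneT" using X Y by (auto simp: D_def)
    have sT: "X + Y \<in> coneT" using XT YT by (simp add: coneT_def psd_add ptrans_add)
    have "X + Y \<noteq> s *\<^sub>R Amat lam" if s: "s > 0" for s
    proof
      assume e: "X + Y = s *\<^sub>R Amat lam"
      have XT': "(1/s) *\<^sub>R X \<in> coneT" and YT': "(1/s) *\<^sub>R Y \<in> coneT"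
        using XT YT s by (auto simp: coneT_def psd_scale ptrans_scale)
      have eqA: "Amat lam = (1/s) *\<^sub>R X + (1/s) *\<^sub>R Y"
        using e s by (simp add: scaleR_add_right[symmetric])
      have eqA': "Amat lam = (1/s) *\<^sub>R Y + (1/s) *\<^sub>R X"
        using eqA by (simp add: add.commute)
      obtain b where b: "b \<ge> 0" "(1/s) *\<^sub>R X = b *\<^sub>R Amat lam"
        using ext_ray[OF lam XT' YT' eqA] by blast
      obtain c where c: "c \<ge> 0" "(1/s) *\<^sub>R Y = c *\<^sub>R Amat lam"
        using ext_ray[OF lam YT' XT' eqA'] by blast
      have Xe: "X = (s * b) *\<^sub>R Amat lam"
        using arg_cong[OF b(2), of "\<lambda>M. s *\<^sub>R M"] s by simp
      have Ye: "Y = (s * c) *\<^sub>R Amat lam"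
        using arg_cong[OF c(2), of "\<lambda>M. s *\<^sub>R M"] s by simp
      show False
      proof (cases "b > 0")
        case True
        have "\<forall>t>0. X \<noteq> t *\<^sub>R Amat lam" using X by (simp add: D_def)
        from this[rule_format, of "s * b"] show False using Xe True s by simp
      next
        case False then have "b = 0" using b(1) by simp
        then have "X = 0" using Xe by simp
        then have "Y = s *\<^sub>R Amat lam" using e by simp
        moreover have "\<forall>t>0. Y \<noteq> t *\<^sub>R Amat lam" using Y by (simp add: D_def)
        ultimately show False using s by blast
      qed
    qed
    then show ?thesis using sT by (simp add: D_def)
  qed
  have scD: "c *\<^sub>R X \<in> D" if X: "X \<in> D" and c: "c \<ge> 0" for X c
  proof -
    have XT: "X \<in> coneT" using X by (auto simp: D_def)
    have sT: "c *\<^sub>R X \<in> coneT" using XT c by (simp add: coneT_def psd_scale ptrans_scale)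
    have "c *\<^sub>R X \<noteq> s *\<^sub>R Amat lam" if s: "s > 0" for s
    proof
      assume e: "c *\<^sub>R X = s *\<^sub>R Amat lam"
      show False
      proof (cases "c = 0")
        case True then show False using e s ray_nz[of s lam] by simp
      next
        case False
        then have "X = (s / c) *\<^sub>R Amat lam"
          using arg_cong[OF e, of "\<lambda>M. (1/c) *\<^sub>R M"] by simp
        moreover have "s / c > 0" using s c False by simp
        moreover have "\<forall>t>0. X \<noteq> t *\<^sub>R Amat lam" using X by (simp add: D_def)
        ultimately show False by blast
      qed
    qed
    then show ?thesis using sT by (simp add: D_def)
  qed
  have cc: "convex_cone D" unfolding convex_cone_iff using zD addD scD by blast
  have sub: "{ztilde_outer z | z. rank z \<le> 1} \<subseteq> D"
    using ztilde_T ztilde_not_ray[OF _ lam0] by (auto simp: D_def)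
  have "coneV1 \<subseteq> D" unfolding coneV1_def by (rule hull_minimal[of _ D convex_cone, OF sub cc])
  moreover have "Amat lam \<notin> D"
  proof
    assume "Amat lam \<in> D"
    then have "\<forall>s>0. Amat lam \<noteq> s *\<^sub>R Amat lam" by (simp add: D_def)
    from this[rule_format, of 1] show False by simp
  qed
  ultimately show ?thesis by blast
qed

theorem mainTheorem2:
  fixes lam :: real
  assumes "lam > 0" and "lam \<noteq> 1"
  shows "Amat lam \<in> coneT - coneV1
    \<and> (\<forall>B C. B \<in> coneT \<and> C \<in> coneT \<and> Amat lam = B + C \<longrightarrow>
         (\<exists>b::real. b \<ge> 0 \<and> B = b *\<^sub>R Amat lam) \<and> (\<exists>c::real. c \<ge> 0 \<and> C = c *\<^sub>R Amat lam))"
proof -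
  have "Amat lam \<in> coneT" using assms by (simp add: A_in_T)
  moreover have "Amat lam \<notin> coneV1" using notV1[OF assms] .
  moreover have "(\<exists>b::real. b \<ge> 0 \<and> B = b *\<^sub>R Amat lam) \<and> (\<exists>c::real. c \<ge> 0 \<and> C = c *\<^sub>R Amat lam)"
    if "B \<in> coneT" "C \<in> coneT" "Amat lam = B + C" for B C
    using ext_ray[OF assms that] ext_ray[OF assms that(2) that(1)] that(3) by (simp add: add.commute)
  ultimately show ?thesis by blast
qed


end
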